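(* Let $S'\le S$ be finite $p$-groups, $\mathcal{F}_1$ a fusion system over $S$, $\mathcal{F}_2,\mathcal{F}_e$ fusion systems over $S'$ with $\mathcal{F}_e\subseteq\mathcal{F}_1\cap\mathcal{F}_2$, $\mathcal{F}=\langle\mathcal{F}_1,\mathcal{F}_2\rangle_S$, $\Lambda=\{\mathcal{F}_1,\mathcal{F}_2,\mathcal{F}_e\}$, and $\mathcal{C}$ a family of subgroups of $S$ containing $S'$ and closed under $\mathcal{F}$-conjugation and overgroups. Let $P\in\mathcal{C}$ and assume that for every $Q\cong_{\mathcal{F}}P$, $\operatorname{Hom}_{\mathcal{F}_e}(Q,S')=\operatorname{Hom}_{\mathcal{F}_1}(Q,S')\cap\operatorname{Hom}_{\mathcal{F}_2}(Q,S')$, and that either (1) $\operatorname{Hom}_{\mathcal{F}}(P,S')=\operatorname{Hom}_{\mathcal{H}}(P,S')$ for some $\mathcal{H}\in\{\mathcal{F}_1,\mathcal{F}_2\}$, or (2) $\operatorname{Aut}_{\mathcal{F}}(P)=\operatorname{Aut}_{\mathcal{F}_2}(P)$ and, for every $Q$ with $Q\cong_{\mathcal{F}}P$ but $Q\not\cong_{\mathcal{F}_e}P$, $\operatorname{Hom}_{\mathcal{F}_e}(Q,S')=\operatorname{Hom}_{\mathcal{F}_2}(Q,S')$. Then the graph $\operatorname{Rep}_{\mathcal{F}}(P,\Lambda)$ is a tree. In particular $H_1(\operatorname{Rep}_{\mathcal{F}}(P,\Lambda);\mathcal{R})=0$ for every commutative ring $\mathcal{R}$.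
   Context: $\langle\mathcal{F}_1,\mathcal{F}_2\rangle_S$ is the smallest fusion system over $S$ containing both. For a fusion system $\mathcal{H}$ over $S_{\mathcal{H}}$ ($S_{\mathcal{F}_1}=S$, $S_{\mathcal{F}_2}=S_{\mathcal{F}_e}=S'$), $\operatorname{Rep}_{\mathcal{F}}(P,\mathcal{H})=\operatorname{Hom}_{\mathcal{F}}(P,S_{\mathcal{H}})/\sim$ where $\varphi\sim\psi$ iff there is an $\mathcal{H}$-isomorphism $\theta:\varphi(P)\to\psi(P)$ with $\theta\varphi=\psi$. $\operatorname{Rep}_{\mathcal{F}}(P,\Lambda)$ is the bipartite graph with vertex set $\operatorname{Rep}_{\mathcal{F}}(P,\mathcal{F}_1)\sqcup\operatorname{Rep}_{\mathcal{F}}(P,\mathcal{F}_2)$ and edge set $\operatorname{Rep}_{\mathcal{F}}(P,\mathcal{F}_e)$, the edge $[\varphi]_{\mathcal{F}_e}$ joining $[\varphi]_{\mathcal{F}_2}$ and $[\iota_{S'}^S\varphi]_{\mathcal{F}_1}$. *)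

theory Defs
  imports "HOL-Algebra.Group" "HOL-Library.FuncSet" "HOL-Computational_Algebra.Primes"
begin

text \<open>A morphism of a fusion system is represented as a pair (P, phi) where P is the
  domain (a subgroup of the ambient group G contained in S) and phi is an injective group
  homomorphism on P, extensional outside P.  The codomain is left implicit: phi belongs to
  Hom(P,Q) for every Q containing the image phi(P).\<close>

definition conjmap :: "('a, 'b) monoid_scheme \<Rightarrow> 'a \<Rightarrow> 'a set \<Rightarrow> 'a \<Rightarrow> 'a" where
  "conjmap G s P = restrict (\<lambda>x. s \<otimes>\<^bsub>G\<^esub> x \<otimes>\<^bsub>G\<^esub> inv\<^bsub>G\<^esub> s) P"

definition fusion_system ::
  "('a, 'b) monoid_scheme \<Rightarrow> 'a set \<Rightarrow> ('a set \<times> ('a \<Rightarrow> 'a)) set \<Rightarrow> bool" where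
  "fusion_system G S F \<longleftrightarrow>
     (\<forall>(P, \<phi>) \<in> F. subgroup P G \<and> P \<subseteq> S \<and> \<phi> \<in> hom (G\<lparr>carrier := P\<rparr>) G
                     \<and> \<phi> ` P \<subseteq> S \<and> inj_on \<phi> P \<and> \<phi> \<in> extensional P)
   \<and> (\<forall>P s. subgroup P G \<and> P \<subseteq> S \<and> s \<in> S \<longrightarrow> (P, conjmap G s P) \<in> F)
   \<and> (\<forall>P \<phi> Q \<psi>. (P, \<phi>) \<in> F \<and> (Q, \<psi>) \<in> F \<and> \<phi> ` P \<subseteq> Q \<longrightarrow> (P, compose P \<psi> \<phi>) \<in> F)
   \<and> (\<forall>P \<phi>. (P, \<phi>) \<in> F \<longrightarrow> (\<phi> ` P, restrict (inv_into P \<phi>) (\<phi> ` P)) \<in> F)"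

definition fusion_gen ::
  "('a, 'b) monoid_scheme \<Rightarrow> 'a set \<Rightarrow> ('a set \<times> ('a \<Rightarrow> 'a)) set
     \<Rightarrow> ('a set \<times> ('a \<Rightarrow> 'a)) set \<Rightarrow> ('a set \<times> ('a \<Rightarrow> 'a)) set" where
  "fusion_gen G S F1 F2 = \<Inter> {F. fusion_system G S F \<and> F1 \<subseteq> F \<and> F2 \<subseteq> F}"

definition Hom_fs :: "('a set \<times> ('a \<Rightarrow> 'a)) set \<Rightarrow> 'a set \<Rightarrow> 'a set \<Rightarrow> ('a \<Rightarrow> 'a) set" where
  "Hom_fs F P Q = {\<phi>. (P, \<phi>) \<in> F \<and> \<phi> ` P \<subseteq> Q}"

definition Aut_fs :: "('a set \<times> ('a \<Rightarrow> 'a)) set \<Rightarrow> 'a set \<Rightarrow> ('a \<Rightarrow> 'a) set" where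
  "Aut_fs F P = {\<phi>. (P, \<phi>) \<in> F \<and> \<phi> ` P = P}"

definition fs_conj :: "('a set \<times> ('a \<Rightarrow> 'a)) set \<Rightarrow> 'a set \<Rightarrow> 'a set \<Rightarrow> bool" where
  "fs_conj F P Q \<longleftrightarrow> (\<exists>\<phi>. (P, \<phi>) \<in> F \<and> \<phi> ` P = Q)"

definition rep_rel :: "('a set \<times> ('a \<Rightarrow> 'a)) set \<Rightarrow> 'a set \<Rightarrow> ('a \<Rightarrow> 'a) \<Rightarrow> ('a \<Rightarrow> 'a) \<Rightarrow> bool" where
  "rep_rel H P \<phi> \<psi> \<longleftrightarrow>
     (\<exists>\<theta>. (\<phi> ` P, \<theta>) \<in> H \<and> \<theta> ` (\<phi> ` P) = \<psi> ` P \<and> compose P \<theta> \<phi> = \<psi>)"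

text \<open>The class [phi]_H in Rep_F(P,H) = Hom_F(P,S_H)/~.\<close>
definition rep_class ::
  "('a set \<times> ('a \<Rightarrow> 'a)) set \<Rightarrow> ('a set \<times> ('a \<Rightarrow> 'a)) set \<Rightarrow> 'a set \<Rightarrow> 'a set
     \<Rightarrow> ('a \<Rightarrow> 'a) \<Rightarrow> ('a \<Rightarrow> 'a) set" where
  "rep_class F H SH P \<phi> = {\<psi> \<in> Hom_fs F P SH. rep_rel H P \<phi> \<psi>}"

definition Rep_fs ::
  "('a set \<times> ('a \<Rightarrow> 'a)) set \<Rightarrow> ('a set \<times> ('a \<Rightarrow> 'a)) set \<Rightarrow> 'a set \<Rightarrow> 'a set
     \<Rightarrow> ('a \<Rightarrow> 'a) set set" where
  "Rep_fs F H SH P = rep_class F H SH P ` Hom_fs F P SH"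

text \<open>Vertices: Rep_F(P,F1) (tagged Inl) disjoint union Rep_F(P,F2) (tagged Inr);
  edges: Rep_F(P,Fe); the edge [phi]_Fe joins [phi]_F2 (source) and [iota phi]_F1 (target).\<close>
definition RepLam_V ::
  "('a set \<times> ('a \<Rightarrow> 'a)) set \<Rightarrow> ('a set \<times> ('a \<Rightarrow> 'a)) set \<Rightarrow> ('a set \<times> ('a \<Rightarrow> 'a)) set
     \<Rightarrow> 'a set \<Rightarrow> 'a set \<Rightarrow> 'a set \<Rightarrow> (('a \<Rightarrow> 'a) set + ('a \<Rightarrow> 'a) set) set" where
  "RepLam_V F F1 F2 S S' P = Inl ` Rep_fs F F1 S P \<union> Inr ` Rep_fs F F2 S' P"

definition RepLam_E ::
  "('a set \<times> ('a \<Rightarrow> 'a)) set \<Rightarrow> ('a set \<times> ('a \<Rightarrow> 'a)) set \<Rightarrow> 'a set \<Rightarrow> 'a set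
     \<Rightarrow> ('a \<Rightarrow> 'a) set set" where
  "RepLam_E F Fe S' P = Rep_fs F Fe S' P"

definition RepLam_src ::
  "('a set \<times> ('a \<Rightarrow> 'a)) set \<Rightarrow> ('a set \<times> ('a \<Rightarrow> 'a)) set \<Rightarrow> 'a set \<Rightarrow> 'a set
     \<Rightarrow> ('a \<Rightarrow> 'a) set \<Rightarrow> ('a \<Rightarrow> 'a) set + ('a \<Rightarrow> 'a) set" where
  "RepLam_src F F2 S' P c = Inr (rep_class F F2 S' P (SOME \<phi>. \<phi> \<in> c))"

definition RepLam_tgt ::
  "('a set \<times> ('a \<Rightarrow> 'a)) set \<Rightarrow> ('a set \<times> ('a \<Rightarrow> 'a)) set \<Rightarrow> 'a set \<Rightarrow> 'a set
     \<Rightarrow> ('a \<Rightarrow> 'a) set \<Rightarrow> ('a \<Rightarrow> 'a) set + ('a \<Rightarrow> 'a) set" where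
  "RepLam_tgt F F1 S P c = Inl (rep_class F F1 S P (SOME \<phi>. \<phi> \<in> c))"

definition graph_connected :: "'v set \<Rightarrow> 'e set \<Rightarrow> ('e \<Rightarrow> 'v) \<Rightarrow> ('e \<Rightarrow> 'v) \<Rightarrow> bool" where
  "graph_connected V E src tgt \<longleftrightarrow> V \<noteq> {} \<and>
     (\<forall>u\<in>V. \<forall>w\<in>V. (u, w) \<in> ({(src e, tgt e) | e. e \<in> E} \<union> {(tgt e, src e) | e. e \<in> E})\<^sup>*)"

definition graph_has_cycle :: "'v set \<Rightarrow> 'e set \<Rightarrow> ('e \<Rightarrow> 'v) \<Rightarrow> ('e \<Rightarrow> 'v) \<Rightarrow> bool" where
  "graph_has_cycle V E src tgt \<longleftrightarrow>
     (\<exists>es vs. es \<noteq> [] \<and> length vs = length es \<and> distinct es \<and> distinct vs \<and> set es \<subseteq> E \<and>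
        (\<forall>i < length es. {src (es ! i), tgt (es ! i)} = {vs ! i, vs ! ((i + 1) mod length es)}))"

definition graph_is_tree :: "'v set \<Rightarrow> 'e set \<Rightarrow> ('e \<Rightarrow> 'v) \<Rightarrow> ('e \<Rightarrow> 'v) \<Rightarrow> bool" where
  "graph_is_tree V E src tgt \<longleftrightarrow> graph_connected V E src tgt \<and> \<not> graph_has_cycle V E src tgt"

text \<open>1-cycles with coefficients in a commutative ring: chains z on E (zero off E) with
  boundary zero.  For a graph (no 2-cells) H_1 equals this module.\<close>
definition graph_Z1 :: "'v set \<Rightarrow> 'e set \<Rightarrow> ('e \<Rightarrow> 'v) \<Rightarrow> ('e \<Rightarrow> 'v) \<Rightarrow> ('e \<Rightarrow> 'r::comm_ring_1) set" where
  "graph_Z1 V E src tgt = {z. (\<forall>e. e \<notin> E \<longrightarrow> z e = 0) \<and>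
     (\<forall>v\<in>V. (\<Sum>e\<in>{e\<in>E. tgt e = v}. z e) - (\<Sum>e\<in>{e\<in>E. src e = v}. z e) = 0)}"

definition graph_H1_zero :: "'v set \<Rightarrow> 'e set \<Rightarrow> ('e \<Rightarrow> 'v) \<Rightarrow> ('e \<Rightarrow> 'v) \<Rightarrow> 'r::comm_ring_1 itself \<Rightarrow> bool" where
  "graph_H1_zero V E src tgt R \<longleftrightarrow> graph_Z1 V E src tgt = {(\<lambda>e. 0 :: 'r)}"

end

theory Submission
  imports Defs
begin


lemma fs_p1:
  assumes "fusion_system G T H"
  shows "\<forall>(P, \<phi>) \<in> H. subgroup P G \<and> P \<subseteq> T \<and> \<phi> \<in> hom (G\<lparr>carrier := P\<rparr>) G
                     \<and> \<phi> ` P \<subseteq> T \<and> inj_on \<phi> P \<and> \<phi> \<in> extensional P"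
  using assms unfolding fusion_system_def by (elim conjE) assumption

lemma fs_p2:
  assumes "fusion_system G T H"
  shows "\<forall>P s. subgroup P G \<and> P \<subseteq> T \<and> s \<in> T \<longrightarrow> (P, conjmap G s P) \<in> H"
  using assms unfolding fusion_system_def by (elim conjE) assumption

lemma fs_p3:
  assumes "fusion_system G T H"
  shows "\<forall>P \<phi> Q \<psi>. (P, \<phi>) \<in> H \<and> (Q, \<psi>) \<in> H \<and> \<phi> ` P \<subseteq> Q \<longrightarrow> (P, compose P \<psi> \<phi>) \<in> H"
  using assms unfolding fusion_system_def by (elim conjE) assumption

lemma fs_p4:
  assumes "fusion_system G T H"
  shows "\<forall>P \<phi>. (P, \<phi>) \<in> H \<longrightarrow> (\<phi> ` P, restrict (inv_into P \<phi>) (\<phi> ` P)) \<in> H"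
  using assms unfolding fusion_system_def by (elim conjE) assumption

lemma fs1:
  assumes "fusion_system G T H" "(Q,\<chi>) \<in> H"
  shows "subgroup Q G \<and> Q \<subseteq> T \<and> \<chi> \<in> hom (G\<lparr>carrier := Q\<rparr>) G \<and> \<chi> ` Q \<subseteq> T \<and>
        inj_on \<chi> Q \<and> \<chi> \<in> extensional Q"
  using bspec[OF fs_p1[OF assms(1)] assms(2)] by simp

lemma fsD:
  assumes "fusion_system G T H" "(Q,\<chi>) \<in> H"
  shows "subgroup Q G" "Q \<subseteq> T" "\<chi> \<in> hom (G\<lparr>carrier := Q\<rparr>) G" "\<chi> ` Q \<subseteq> T"
        "inj_on \<chi> Q" "\<chi> \<in> extensional Q"
  using fs1[OF assms] by simp_all

lemma fs_conjmap:
  assumes "fusion_system G T H" "subgroup Q G" "Q \<subseteq> T" "s \<in> T"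
  shows "(Q, conjmap G s Q) \<in> H"
  using fs_p2[OF assms(1)] assms(2-4) by simp

lemma fs_comp:
  assumes "fusion_system G T H" "(Q,\<phi>) \<in> H" "(R,\<psi>) \<in> H" "\<phi> ` Q \<subseteq> R"
  shows "(Q, compose Q \<psi> \<phi>) \<in> H"
  using fs_p3[OF assms(1)] assms(2-4) by blast

lemma fs_inv:
  assumes "fusion_system G T H" "(Q,\<phi>) \<in> H"
  shows "(\<phi> ` Q, restrict (inv_into Q \<phi>) (\<phi> ` Q)) \<in> H"
  using fs_p4[OF assms(1)] assms(2) by simp

lemma fs_img_sub:
  assumes "fusion_system G T H" "(Q,\<phi>) \<in> H"
  shows "subgroup (\<phi> ` Q) G"
  using fsD(1)[OF assms(1) fs_inv[OF assms]] by simp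

lemma conjmap_one:
  assumes "group G" "subgroup Q G"
  shows "conjmap G \<one>\<^bsub>G\<^esub> Q = restrict (\<lambda>x. x) Q"
proof -
  have "\<And>x. x \<in> Q \<Longrightarrow> \<one>\<^bsub>G\<^esub> \<otimes>\<^bsub>G\<^esub> x \<otimes>\<^bsub>G\<^esub> inv\<^bsub>G\<^esub> \<one>\<^bsub>G\<^esub> = x"
  proof -
    fix x assume "x \<in> Q"
    then have "x \<in> carrier G" using subgroup.subset[OF assms(2)] by (rule rev_subsetD)
    then show "\<one>\<^bsub>G\<^esub> \<otimes>\<^bsub>G\<^esub> x \<otimes>\<^bsub>G\<^esub> inv\<^bsub>G\<^esub> \<one>\<^bsub>G\<^esub> = x"
      using assms(1) by (simp add: monoid.inv_one group.is_monoid monoid.l_one monoid.r_one)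
  qed
  then show ?thesis unfolding conjmap_def by (intro restrict_ext) auto
qed

lemma fs_id:
  assumes "fusion_system G T H" "group G" "subgroup T G" "subgroup Q G" "Q \<subseteq> T"
  shows "(Q, restrict (\<lambda>x. x) Q) \<in> H"
  using fs_conjmap[OF assms(1,4,5) subgroup.one_closed[OF assms(3)]] conjmap_one[OF assms(2,4)] by simp

definition Ufs :: "('a, 'b) monoid_scheme \<Rightarrow> 'a set \<Rightarrow> ('a set \<times> ('a \<Rightarrow> 'a)) set" where
  "Ufs G S = {(Q,\<phi>). subgroup Q G \<and> Q \<subseteq> S \<and> \<phi> \<in> hom (G\<lparr>carrier := Q\<rparr>) G
                     \<and> \<phi> ` Q \<subseteq> S \<and> inj_on \<phi> Q \<and> \<phi> \<in> extensional Q}"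

lemma hom_sub_iff:
  "\<phi> \<in> hom (G\<lparr>carrier := Q\<rparr>) G \<longleftrightarrow> \<phi> \<in> Q \<rightarrow> carrier G \<and>
     (\<forall>x\<in>Q. \<forall>y\<in>Q. \<phi> (x \<otimes>\<^bsub>G\<^esub> y) = \<phi> x \<otimes>\<^bsub>G\<^esub> \<phi> y)"
  unfolding hom_def by simp

lemma (in group) Ufs_fs:
  assumes SS: "subgroup S G"
  shows "fusion_system G S (Ufs G S)"
  unfolding fusion_system_def
proof (intro conjI allI impI)
  show "\<forall>(P, \<phi>)\<in>Ufs G S. subgroup P G \<and> P \<subseteq> S \<and> \<phi> \<in> hom (G\<lparr>carrier := P\<rparr>) G \<and>
        \<phi> ` P \<subseteq> S \<and> inj_on \<phi> P \<and> \<phi> \<in> extensional P"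
    unfolding Ufs_def by blast
next
  fix P s assume a: "subgroup P G \<and> P \<subseteq> S \<and> s \<in> S"
  have Psub: "subgroup P G" and PS: "P \<subseteq> S" and sS: "s \<in> S" using a by simp_all
  have sG: "s \<in> carrier G" using subgroup.subset[OF SS] sS by (rule subsetD)
  have PG: "P \<subseteq> carrier G" using subgroup.subset[OF Psub] .
  have hom: "conjmap G s P \<in> hom (G\<lparr>carrier := P\<rparr>) G"
    unfolding hom_sub_iff conjmap_def
  proof (intro conjI ballI)
    show "(\<lambda>x\<in>P. s \<otimes> x \<otimes> inv s) \<in> P \<rightarrow> carrier G" using sG PG by auto
  next
    fix x y assume xy: "x \<in> P" "y \<in> P"
    then have xyG: "x \<in> carrier G" "y \<in> carrier G" using PG by auto
    have xyP: "x \<otimes> y \<in> P" using subgroup.m_closed[OF Psub xy] .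
    have lem: "inv s \<otimes> (s \<otimes> z) = z" if "z \<in> carrier G" for z
      using sG that by (simp add: m_assoc[symmetric])
    have "s \<otimes> x \<otimes> inv s \<otimes> (s \<otimes> y \<otimes> inv s) = s \<otimes> (x \<otimes> (inv s \<otimes> (s \<otimes> (y \<otimes> inv s))))"
      using sG xyG by (simp add: m_assoc)
    also have "\<dots> = s \<otimes> (x \<otimes> (y \<otimes> inv s))" using lem sG xyG by simp
    also have "\<dots> = s \<otimes> (x \<otimes> y) \<otimes> inv s" using sG xyG by (simp add: m_assoc)
    finally have X: "s \<otimes> (x \<otimes> y) \<otimes> inv s = s \<otimes> x \<otimes> inv s \<otimes> (s \<otimes> y \<otimes> inv s)" by simp
    show "(\<lambda>x\<in>P. s \<otimes> x \<otimes> inv s) (x \<otimes> y) =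
         (\<lambda>x\<in>P. s \<otimes> x \<otimes> inv s) x \<otimes> (\<lambda>x\<in>P. s \<otimes> x \<otimes> inv s) y" using xy xyP X by simp
  qed
  have img: "conjmap G s P ` P \<subseteq> S"
  proof
    fix z assume "z \<in> conjmap G s P ` P"
    then obtain x where x: "x \<in> P" "z = s \<otimes> x \<otimes> inv s" unfolding conjmap_def by auto
    have xS: "x \<in> S" using PS x(1) by (rule subsetD)
    have "s \<otimes> x \<in> S" using subgroup.m_closed[OF SS sS xS] .
    moreover have "inv s \<in> S" using subgroup.m_inv_closed[OF SS sS] .
    ultimately show "z \<in> S" unfolding x(2) by (rule subgroup.m_closed[OF SS])
  qed
  have inj: "inj_on (conjmap G s P) P"
  proof
    fix x y assume xy: "x \<in> P" "y \<in> P" "conjmap G s P x = conjmap G s P y"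
    then have "s \<otimes> x \<otimes> inv s = s \<otimes> y \<otimes> inv s" unfolding conjmap_def by simp
    moreover have xyG: "x \<in> carrier G" "y \<in> carrier G" using xy PG by auto
    ultimately have "s \<otimes> x = s \<otimes> y" using sG by simp
    then have "inv s \<otimes> (s \<otimes> x) = inv s \<otimes> (s \<otimes> y)" by simp
    then show "x = y" using sG xyG by (simp add: m_assoc[symmetric])
  qed
  show "(P, conjmap G s P) \<in> Ufs G S"
    unfolding Ufs_def using a hom img inj by (auto simp: conjmap_def)
next
  fix P \<phi> Q \<psi> assume a: "(P, \<phi>) \<in> Ufs G S \<and> (Q, \<psi>) \<in> Ufs G S \<and> \<phi> ` P \<subseteq> Q"
  then have A: "subgroup P G" "P \<subseteq> S" "\<phi> \<in> hom (G\<lparr>carrier := P\<rparr>) G" "\<phi> ` P \<subseteq> S"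
        "inj_on \<phi> P" "\<psi> \<in> hom (G\<lparr>carrier := Q\<rparr>) G" "\<psi> ` Q \<subseteq> S" "inj_on \<psi> Q" "\<phi> ` P \<subseteq> Q"
    unfolding Ufs_def by auto
  have "compose P \<psi> \<phi> \<in> hom (G\<lparr>carrier := P\<rparr>) G"
    unfolding hom_sub_iff
  proof (intro conjI ballI)
    show "compose P \<psi> \<phi> \<in> P \<rightarrow> carrier G" using A(6,9) unfolding hom_sub_iff compose_def by auto
  next
    fix x y assume xy: "x \<in> P" "y \<in> P"
    have "x \<otimes>\<^bsub>G\<^esub> y \<in> P" using subgroup.m_closed[OF A(1) xy] .
    moreover have "\<phi> x \<in> Q" "\<phi> y \<in> Q" using xy A(9) by auto
    ultimately show "compose P \<psi> \<phi> (x \<otimes>\<^bsub>G\<^esub> y) = compose P \<psi> \<phi> x \<otimes>\<^bsub>G\<^esub> compose P \<psi> \<phi> y"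
      using xy A(3,6) unfolding hom_sub_iff by (simp add: compose_eq)
  qed
  moreover have "compose P \<psi> \<phi> ` P \<subseteq> S" using A(7,9) by (auto simp: compose_eq)
  moreover have "inj_on (compose P \<psi> \<phi>) P"
    using A(5,8,9) unfolding inj_on_def by (simp add: compose_eq subset_iff image_subset_iff)
  ultimately show "(P, compose P \<psi> \<phi>) \<in> Ufs G S" using A unfolding Ufs_def by (auto simp: compose_def)
next
  fix P \<phi> assume a: "(P, \<phi>) \<in> Ufs G S"
  then have A: "subgroup P G" "P \<subseteq> S" "\<phi> \<in> hom (G\<lparr>carrier := P\<rparr>) G" "\<phi> ` P \<subseteq> S"
        "inj_on \<phi> P" unfolding Ufs_def by auto
  have gh: "group_hom (G\<lparr>carrier := P\<rparr>) G \<phi>"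
    unfolding group_hom_def group_hom_axioms_def
    using subgroup.subgroup_is_group[OF A(1) is_group] is_group A(3) by simp
  have sub: "subgroup (\<phi> ` P) G" using group_hom.img_is_subgroup[OF gh] by simp
  have PG: "P \<subseteq> carrier G" using subgroup.subset[OF A(1)] .
  have "restrict (inv_into P \<phi>) (\<phi> ` P) \<in> hom (G\<lparr>carrier := \<phi> ` P\<rparr>) G"
    unfolding hom_sub_iff
  proof (intro conjI ballI)
    show "restrict (inv_into P \<phi>) (\<phi> ` P) \<in> \<phi> ` P \<rightarrow> carrier G" using PG by (auto simp: inv_into_into)
  next
    fix u v assume uv: "u \<in> \<phi> ` P" "v \<in> \<phi> ` P"
    then obtain a b where ab: "a \<in> P" "b \<in> P" "u = \<phi> a" "v = \<phi> b" by auto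
    have abP: "a \<otimes> b \<in> P" using subgroup.m_closed[OF A(1) ab(1,2)] .
    have "u \<otimes> v = \<phi> (a \<otimes> b)" using ab A(3) unfolding hom_sub_iff by simp
    moreover have "\<phi> (a \<otimes> b) \<in> \<phi> ` P" using abP by simp
    ultimately show "restrict (inv_into P \<phi>) (\<phi> ` P) (u \<otimes> v) =
          restrict (inv_into P \<phi>) (\<phi> ` P) u \<otimes> restrict (inv_into P \<phi>) (\<phi> ` P) v"
      using uv ab abP A(5) by (simp add: inv_into_f_f)
  qed
  moreover have "restrict (inv_into P \<phi>) (\<phi> ` P) ` (\<phi> ` P) \<subseteq> S" using A(2) by (auto simp: inv_into_into)
  moreover have "inj_on (restrict (inv_into P \<phi>) (\<phi> ` P)) (\<phi> ` P)"
    using inj_on_inv_into[of "\<phi> ` P" \<phi> P] by (simp add: inj_on_def)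
  moreover have "\<phi> ` P \<subseteq> S" by fact
  ultimately show "(\<phi> ` P, restrict (inv_into P \<phi>) (\<phi> ` P)) \<in> Ufs G S"
    using sub unfolding Ufs_def by auto
qed




lemma rep_refl:
  assumes "fusion_system G T H" "group G" "subgroup T G" "subgroup (\<phi> ` P) G" "\<phi> ` P \<subseteq> T"
    "\<phi> \<in> extensional P"
  shows "rep_rel H P \<phi> \<phi>"
  unfolding rep_rel_def
proof (intro exI conjI)
  show "(\<phi> ` P, restrict (\<lambda>x. x) (\<phi> ` P)) \<in> H" using fs_id[OF assms(1,2,3,4,5)] .
  show "restrict (\<lambda>x. x) (\<phi> ` P) ` \<phi> ` P = \<phi> ` P" by auto
  show "compose P (restrict (\<lambda>x. x) (\<phi> ` P)) \<phi> = \<phi>"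
    using assms(6) by (auto simp: fun_eq_iff compose_def extensional_def)
qed

lemma rep_sym:
  assumes H: "fusion_system G T H" and r: "rep_rel H P \<phi> \<psi>" and e: "\<phi> \<in> extensional P"
  shows "rep_rel H P \<psi> \<phi>"
proof -
  obtain \<theta> where t: "(\<phi> ` P, \<theta>) \<in> H" "\<theta> ` \<phi> ` P = \<psi> ` P" "compose P \<theta> \<phi> = \<psi>"
    using r unfolding rep_rel_def by blast
  have inj: "inj_on \<theta> (\<phi> ` P)" using fsD(5)[OF H t(1)] .
  define \<theta>' where "\<theta>' = restrict (inv_into (\<phi> ` P) \<theta>) (\<theta> ` \<phi> ` P)"
  have "(\<psi> ` P, \<theta>') \<in> H" using fs_inv[OF H t(1)] t(2) unfolding \<theta>'_def by simp
  moreover have "\<theta>' ` \<psi> ` P = \<phi> ` P"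
  proof -
    have "\<theta>' ` \<psi> ` P = \<theta>' ` \<theta> ` \<phi> ` P" using t(2) by simp
    also have "\<dots> = (\<lambda>y. \<theta>' (\<theta> y)) ` \<phi> ` P" by (simp add: image_image)
    also have "\<dots> = (\<lambda>y. y) ` \<phi> ` P"
      by (rule image_cong) (simp_all add: \<theta>'_def inv_into_f_f[OF inj])
    finally show ?thesis by simp
  qed
  moreover have "compose P \<theta>' \<psi> = \<phi>"
  proof
    fix x show "compose P \<theta>' \<psi> x = \<phi> x"
    proof (cases "x \<in> P")
      case True
      then have "\<psi> x = \<theta> (\<phi> x)" using t(3) by (auto simp: compose_eq)
      then show ?thesis using True inj unfolding \<theta>'_def by (simp add: compose_eq inv_into_f_f)
    next
      case False then show ?thesis using e by (simp add: compose_def extensional_def)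
    qed
  qed
  ultimately show ?thesis unfolding rep_rel_def by blast
qed

lemma rep_trans:
  assumes H: "fusion_system G T H" and r1: "rep_rel H P \<phi> \<psi>" and r2: "rep_rel H P \<psi> \<chi>"
  shows "rep_rel H P \<phi> \<chi>"
proof -
  obtain \<theta>1 where t1: "(\<phi> ` P, \<theta>1) \<in> H" "\<theta>1 ` \<phi> ` P = \<psi> ` P" "compose P \<theta>1 \<phi> = \<psi>"
    using r1 unfolding rep_rel_def by blast
  obtain \<theta>2 where t2: "(\<psi> ` P, \<theta>2) \<in> H" "\<theta>2 ` \<psi> ` P = \<chi> ` P" "compose P \<theta>2 \<psi> = \<chi>"
    using r2 unfolding rep_rel_def by blast
  have "(\<phi> ` P, compose (\<phi> ` P) \<theta>2 \<theta>1) \<in> H" using fs_comp[OF H t1(1) t2(1)] t1(2) by simp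
  moreover have "compose (\<phi> ` P) \<theta>2 \<theta>1 ` \<phi> ` P = \<chi> ` P"
  proof -
    have "compose (\<phi> ` P) \<theta>2 \<theta>1 ` \<phi> ` P = (\<lambda>y. \<theta>2 (\<theta>1 y)) ` \<phi> ` P"
      by (rule image_cong) (simp_all add: compose_eq)
    also have "\<dots> = \<theta>2 ` \<theta>1 ` \<phi> ` P" by (simp add: image_image)
    also have "\<dots> = \<chi> ` P" using t1(2) t2(2) by simp
    finally show ?thesis .
  qed
  moreover have "compose P (compose (\<phi> ` P) \<theta>2 \<theta>1) \<phi> = compose P \<theta>2 (compose P \<theta>1 \<phi>)"
    by (auto simp: fun_eq_iff compose_def)
  then have "compose P (compose (\<phi> ` P) \<theta>2 \<theta>1) \<phi> = \<chi>" using t1(3) t2(3) by simp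
  ultimately show ?thesis unfolding rep_rel_def by blast
qed

lemma rep_mono: "H \<subseteq> H' \<Longrightarrow> rep_rel H P \<phi> \<psi> \<Longrightarrow> rep_rel H' P \<phi> \<psi>"
  unfolding rep_rel_def by blast

lemma rep_class_eq:
  assumes H: "fusion_system G T H" and r: "rep_rel H P \<phi> \<psi>" and e: "\<phi> \<in> extensional P"
  shows "rep_class F H T' P \<phi> = rep_class F H T' P \<psi>"
  unfolding rep_class_def using rep_trans[OF H] rep_sym[OF H r e] r by blast

lemma rep_restr:
  assumes H: "fusion_system G T H" "group G" "subgroup T G" and q: "(Q,\<chi>) \<in> H"
    and s: "\<phi> ` P \<subseteq> Q" "subgroup (\<phi> ` P) G"
  shows "rep_rel H P \<phi> (compose P \<chi> \<phi>)"
  unfolding rep_rel_def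
proof (intro exI conjI)
  have QT: "Q \<subseteq> T" using fsD(2)[OF H(1) q] .
  have PT: "\<phi> ` P \<subseteq> T" using s(1) QT by (rule subset_trans)
  have i: "(\<phi> ` P, restrict (\<lambda>x. x) (\<phi> ` P)) \<in> H" using fs_id[OF H(1,2,3) s(2) PT] .
  have "restrict (\<lambda>x. x) (\<phi> ` P) ` \<phi> ` P \<subseteq> Q" using s(1) by simp
  from fs_comp[OF H(1) i q this]
  show "(\<phi> ` P, compose (\<phi> ` P) \<chi> (restrict (\<lambda>x. x) (\<phi> ` P))) \<in> H" .
  have e1: "\<And>y. y \<in> \<phi> ` P \<Longrightarrow> compose (\<phi> ` P) \<chi> (restrict (\<lambda>x. x) (\<phi> ` P)) y = \<chi> y"
    by (simp add: compose_eq)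
  have e2: "\<And>x. x \<in> P \<Longrightarrow> compose P \<chi> \<phi> x = \<chi> (\<phi> x)" by (simp add: compose_eq)
  have "compose (\<phi> ` P) \<chi> (restrict (\<lambda>x. x) (\<phi> ` P)) ` \<phi> ` P = \<chi> ` \<phi> ` P"
    using image_cong[OF refl e1] .
  also have "\<dots> = (\<lambda>x. \<chi> (\<phi> x)) ` P" by (simp add: image_image)
  also have "\<dots> = compose P \<chi> \<phi> ` P" by (rule image_cong[OF refl e2, symmetric])
  finally show "compose (\<phi> ` P) \<chi> (restrict (\<lambda>x. x) (\<phi> ` P)) ` \<phi> ` P = compose P \<chi> \<phi> ` P" .
  show "compose P (compose (\<phi> ` P) \<chi> (restrict (\<lambda>x. x) (\<phi> ` P))) \<phi> = compose P \<chi> \<phi>"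
    by (auto simp: fun_eq_iff compose_def)
qed

lemma fs_Inter:
  assumes ne: "F0 \<in> A" and all: "\<And>F. F \<in> A \<Longrightarrow> fusion_system G S F"
  shows "fusion_system G S (\<Inter>A)"
  unfolding fusion_system_def
proof (intro conjI allI impI)
  show "\<forall>(P, \<phi>)\<in>\<Inter>A. subgroup P G \<and> P \<subseteq> S \<and> \<phi> \<in> hom (G\<lparr>carrier := P\<rparr>) G \<and>
        \<phi> ` P \<subseteq> S \<and> inj_on \<phi> P \<and> \<phi> \<in> extensional P"
  proof (clarify)
    fix P \<phi> assume "(P, \<phi>) \<in> \<Inter>A"
    then have "(P, \<phi>) \<in> F0" using ne by blast
    note d = fsD[OF all[OF ne] this]
    show "subgroup P G \<and> P \<subseteq> S \<and> \<phi> \<in> hom (G\<lparr>carrier := P\<rparr>) G \<and>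
        \<phi> ` P \<subseteq> S \<and> inj_on \<phi> P \<and> \<phi> \<in> extensional P" using d by blast
  qed
next
  fix P s assume a: "subgroup P G \<and> P \<subseteq> S \<and> s \<in> S"
  show "(P, conjmap G s P) \<in> \<Inter>A"
  proof
    fix F assume "F \<in> A"
    from fs_conjmap[OF all[OF this]] a show "(P, conjmap G s P) \<in> F" by simp
  qed
next
  fix P \<phi> Q \<psi> assume a: "(P, \<phi>) \<in> \<Inter>A \<and> (Q, \<psi>) \<in> \<Inter>A \<and> \<phi> ` P \<subseteq> Q"
  show "(P, compose P \<psi> \<phi>) \<in> \<Inter>A"
  proof
    fix F assume "F \<in> A"
    then show "(P, compose P \<psi> \<phi>) \<in> F" using fs_comp[OF all[of F]] a by blast
  qed
next
  fix P \<phi> assume a: "(P, \<phi>) \<in> \<Inter>A"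
  show "(\<phi> ` P, restrict (inv_into P \<phi>) (\<phi> ` P)) \<in> \<Inter>A"
  proof
    fix F assume "F \<in> A"
    then show "(\<phi> ` P, restrict (inv_into P \<phi>) (\<phi> ` P)) \<in> F" using fs_inv[OF all[of F]] a by blast
  qed
qed

lemma fusion_gen_props:
  assumes "group G" "subgroup S G" "fusion_system G S F1" "fusion_system G S' F2" "S' \<subseteq> S"
  shows "fusion_system G S (fusion_gen G S F1 F2)" "F1 \<subseteq> fusion_gen G S F1 F2"
    "F2 \<subseteq> fusion_gen G S F1 F2"
    "\<And>F'. fusion_system G S F' \<Longrightarrow> F1 \<subseteq> F' \<Longrightarrow> F2 \<subseteq> F' \<Longrightarrow> fusion_gen G S F1 F2 \<subseteq> F'"
proof -
  let ?U = "Ufs G S"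
  have U: "fusion_system G S ?U" using group.Ufs_fs[OF assms(1,2)] .
  have "F1 \<subseteq> ?U"
  proof
    fix x assume "x \<in> F1"
    then obtain a b where x: "x = (a,b)" "(a,b) \<in> F1" by (cases x) auto
    show "x \<in> ?U" using fsD[OF assms(3) x(2)] x(1) unfolding Ufs_def by auto
  qed
  moreover have "F2 \<subseteq> ?U"
  proof
    fix x assume "x \<in> F2"
    then obtain a b where x: "x = (a,b)" "(a,b) \<in> F2" by (cases x) auto
    show "x \<in> ?U" using fsD[OF assms(4) x(2)] x(1) assms(5) unfolding Ufs_def by auto
  qed
  ultimately have ne: "?U \<in> {F. fusion_system G S F \<and> F1 \<subseteq> F \<and> F2 \<subseteq> F}" using U by blast
  show "F1 \<subseteq> fusion_gen G S F1 F2" "F2 \<subseteq> fusion_gen G S F1 F2"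
    unfolding fusion_gen_def by auto
  show "\<And>F'. fusion_system G S F' \<Longrightarrow> F1 \<subseteq> F' \<Longrightarrow> F2 \<subseteq> F' \<Longrightarrow> fusion_gen G S F1 F2 \<subseteq> F'"
    unfolding fusion_gen_def by auto
  show "fusion_system G S (fusion_gen G S F1 F2)"
    unfolding fusion_gen_def by (rule fs_Inter) (use ne in auto)
qed




lemma leaf_zero:
  assumes z: "z \<in> graph_Z1 V E src tgt" and e: "e \<in> E"
    and st: "\<And>e e'. e \<in> E \<Longrightarrow> e' \<in> E \<Longrightarrow> src e \<noteq> tgt e'"
    and VE: "\<And>e. e \<in> E \<Longrightarrow> src e \<in> V \<and> tgt e \<in> V"
    and w: "w \<in> {src e, tgt e}" and leaf: "\<forall>e'\<in>E. w \<in> {src e', tgt e'} \<longrightarrow> e' = e"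
  shows "z e = 0"
proof -
  have wV: "w \<in> V" using w VE e by auto
  have bd: "(\<Sum>e\<in>{e\<in>E. tgt e = w}. z e) - (\<Sum>e\<in>{e\<in>E. src e = w}. z e) = 0"
    using z wV unfolding graph_Z1_def by blast
  show ?thesis
  proof (cases "w = src e")
    case True
    have A: "{e'\<in>E. src e' = w} = {e}" using leaf e True by auto
    have B: "{e'\<in>E. tgt e' = w} = {}" using leaf e True st by fastforce
    show ?thesis using bd unfolding A B by simp
  next
    case False
    then have wt: "w = tgt e" using w by auto
    have A: "{e'\<in>E. tgt e' = w} = {e}" using leaf e wt by auto
    have B: "{e'\<in>E. src e' = w} = {}" using leaf e wt st by fastforce
    show ?thesis using bd unfolding A B by simp
  qed
qed

lemma modne: "(n::nat) \<ge> 2 \<Longrightarrow> i < n \<Longrightarrow> (i + 1) mod n \<noteq> i"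
proof (cases "i + 1 < n")
  case True then show ?thesis by simp
next
  case False
  assume n: "n \<ge> 2" and i: "i < n"
  then have "i + 1 = n" using False by simp
  then show ?thesis using n by auto
qed

lemma graph_lemma:
  assumes fin: "finite E"
    and VE: "\<And>e. e \<in> E \<Longrightarrow> src e \<in> V \<and> tgt e \<in> V"
    and st: "\<And>e e'. e \<in> E \<Longrightarrow> e' \<in> E \<Longrightarrow> src e \<noteq> tgt e'"
    and inj: "\<And>e e'. e \<in> E \<Longrightarrow> e' \<in> E \<Longrightarrow> src e = src e' \<Longrightarrow> tgt e = tgt e' \<Longrightarrow> e = e'"
    and hub: "\<And>e. e \<in> E \<Longrightarrow> h \<in> {src e, tgt e} \<or>
                 (\<exists>w\<in>{src e, tgt e}. \<forall>e'\<in>E. w \<in> {src e', tgt e'} \<longrightarrow> e' = e)"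
  shows "\<not> graph_has_cycle V E src tgt" "graph_Z1 V E src tgt = {(\<lambda>e. 0 :: 'r::comm_ring_1)}"
proof
  have inj2: "\<And>e e'. e \<in> E \<Longrightarrow> e' \<in> E \<Longrightarrow> {src e, tgt e} = {src e', tgt e'} \<Longrightarrow> e = e'"
    using st inj by (metis doubleton_eq_iff)
  assume "graph_has_cycle V E src tgt"
  then obtain es vs where c: "es \<noteq> []" "length vs = length es" "distinct es" "distinct vs" "set es \<subseteq> E"
    "\<And>i. i < length es \<Longrightarrow> {src (es ! i), tgt (es ! i)} = {vs ! i, vs ! ((i + 1) mod length es)}"
    unfolding graph_has_cycle_def by blast
  define n where "n = length es"
  have n1: "n \<ge> 1" using c(1) unfolding n_def by (cases es) auto
  have esE: "\<And>i. i < n \<Longrightarrow> es ! i \<in> E" using c(5) unfolding n_def by auto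
  have cyc: "\<And>i. i < n \<Longrightarrow> {src (es ! i), tgt (es ! i)} = {vs ! i, vs ! ((i + 1) mod n)}"
    using c(6) unfolding n_def by blast
  have desi: "\<And>i j. i < n \<Longrightarrow> j < n \<Longrightarrow> es ! i = es ! j \<Longrightarrow> i = j"
    using c(3) unfolding n_def by (simp add: nth_eq_iff_index_eq)
  have dvsi: "\<And>i j. i < n \<Longrightarrow> j < n \<Longrightarrow> vs ! i = vs ! j \<Longrightarrow> i = j"
    using c(2,4) unfolding n_def by (simp add: nth_eq_iff_index_eq)
  show False
  proof (cases "n = 1")
    case True
    have "{src (es ! 0), tgt (es ! 0)} = {vs ! 0, vs ! 0}" using cyc[of 0] True by simp
    then have "src (es ! 0) = tgt (es ! 0)" by (metis doubleton_eq_iff insert_absorb2)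
    moreover have "es ! 0 \<in> E" using esE n1 by simp
    ultimately show False using st by blast
  next
    case False
    then have n2: "n \<ge> 2" using n1 by simp
    have allh: "h \<in> {vs ! i, vs ! ((i + 1) mod n)}" if i: "i < n" for i
    proof -
      have "h \<in> {src (es ! i), tgt (es ! i)} \<or>
            (\<exists>w\<in>{src (es ! i), tgt (es ! i)}. \<forall>e'\<in>E. w \<in> {src e', tgt e'} \<longrightarrow> e' = es ! i)"
        using hub esE i by blast
      moreover have "\<not> (\<exists>w\<in>{src (es ! i), tgt (es ! i)}. \<forall>e'\<in>E. w \<in> {src e', tgt e'} \<longrightarrow> e' = es ! i)"
      proof
        assume "\<exists>w\<in>{src (es ! i), tgt (es ! i)}. \<forall>e'\<in>E. w \<in> {src e', tgt e'} \<longrightarrow> e' = es ! i"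
        then obtain w where w: "w \<in> {vs ! i, vs ! ((i + 1) mod n)}"
          and lf: "\<forall>e'\<in>E. w \<in> {src e', tgt e'} \<longrightarrow> e' = es ! i" using cyc i by auto
        show False
        proof (cases "w = vs ! i")
          case True
          define j where "j = (i + n - 1) mod n"
          have j: "j < n" unfolding j_def using n1 by simp
          have "(j + 1) mod n = i"
          proof -
            have "((i + n - 1) mod n + 1) mod n = (i + n - 1 + 1) mod n" by (rule mod_add_left_eq)
            also have "i + n - 1 + 1 = i + n" using n1 by simp
            also have "(i + n) mod n = i" using i by simp
            finally show ?thesis unfolding j_def .
          qed
          then have "w \<in> {src (es ! j), tgt (es ! j)}" using cyc[OF j] True by simp
          then have "es ! j = es ! i" using lf esE[OF j] by blast
          then have "j = i" using desi j i by blast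
          then show False using \<open>(j + 1) mod n = i\<close> modne[OF n2 i] by simp
        next
          case False
          then have ww: "w = vs ! ((i + 1) mod n)" using w by auto
          define j where "j = (i + 1) mod n"
          have j: "j < n" unfolding j_def using n1 by simp
          have "w \<in> {src (es ! j), tgt (es ! j)}" using cyc[OF j] ww unfolding j_def by simp
          then have "es ! j = es ! i" using lf esE[OF j] by blast
          then have "j = i" using desi j i by blast
          then show False unfolding j_def using modne[OF n2 i] by simp
        qed
      qed
      ultimately show ?thesis using cyc[OF i] by auto
    qed
    show False
    proof (cases "n = 2")
      case True
      have A: "{src (es ! 0), tgt (es ! 0)} = {vs ! 0, vs ! 1}" using cyc[of 0] True by simp
      have B: "{src (es ! 1), tgt (es ! 1)} = {vs ! 1, vs ! 0}" using cyc[of 1] True by simp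
      have e0: "es ! 0 \<in> E" and e1: "es ! 1 \<in> E" using esE True by auto
      have "{src (es ! 0), tgt (es ! 0)} = {src (es ! 1), tgt (es ! 1)}" using A B by (simp add: insert_commute)
      then have "es ! 0 = es ! 1" using inj2[OF e0 e1] by simp
      then show False using desi[of 0 1] True by simp
    next
      case False
      then have n3: "n \<ge> 3" using n2 by simp
      have d01: "vs ! 0 \<noteq> vs ! 1" "vs ! 0 \<noteq> vs ! 2" "vs ! 1 \<noteq> vs ! 2"
        using dvsi[of 0 1] dvsi[of 0 2] dvsi[of 1 2] n3 by auto
      have h0: "h \<in> {vs ! 0, vs ! 1}" using allh[of 0] n3 by simp
      have h1: "h \<in> {vs ! 1, vs ! 2}" using allh[of 1] n3 by (simp add: numeral_2_eq_2)
      have h2: "h \<in> {vs ! 2, vs ! (3 mod n)}" using allh[of 2] n3 by (simp add: numeral_3_eq_3)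
      have "3 mod n \<noteq> 1" using n3 by (cases "n = 3") auto
      moreover have "3 mod n < n" using n3 by simp
      ultimately have "vs ! (3 mod n) \<noteq> vs ! 1" using dvsi[of "3 mod n" 1] n3 by auto
      then show False using h0 h1 h2 d01 by auto
    qed
  qed
next
  show "graph_Z1 V E src tgt = {(\<lambda>e. 0 :: 'r::comm_ring_1)}"
  proof
    show "{\<lambda>e. 0} \<subseteq> graph_Z1 V E src tgt" unfolding graph_Z1_def by simp
    show "graph_Z1 V E src tgt \<subseteq> {\<lambda>e. 0}"
    proof
      fix z assume z: "z \<in> graph_Z1 V E src tgt"
      have L: "z e = 0" if e: "e \<in> E" "\<exists>w\<in>{src e, tgt e}. \<forall>e'\<in>E. w \<in> {src e', tgt e'} \<longrightarrow> e' = e" for e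
        using leaf_zero[OF z e(1) st VE] e(2) by blast
      have "z e = 0" for e
      proof (cases "e \<in> E")
        case False then show ?thesis using z unfolding graph_Z1_def by blast
      next
        case eE: True
        show ?thesis
        proof (cases "\<exists>w\<in>{src e, tgt e}. \<forall>e'\<in>E. w \<in> {src e', tgt e'} \<longrightarrow> e' = e")
          case True then show ?thesis using L eE by blast
        next
          case nl: False
          then have hh: "h \<in> {src e, tgt e}" using hub eE by blast
          have others: "z e' = 0" if "e' \<in> E" "e' \<noteq> e" "h \<in> {src e', tgt e'} \<Longrightarrow> src e' = src e \<and> tgt e' = tgt e" for e'
          proof -
            have "\<not> h \<in> {src e', tgt e'}" using that inj eE by blast
            then show ?thesis using hub[OF that(1)] L that(1) by blast
          qed
          show ?thesis
          proof (cases "h = src e")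
            case True
            define w where "w = tgt e"
            have wV: "w \<in> V" using VE eE w_def by blast
            have bd: "(\<Sum>e\<in>{e\<in>E. tgt e = w}. z e) - (\<Sum>e\<in>{e\<in>E. src e = w}. z e) = 0"
              using z wV unfolding graph_Z1_def by blast
            have s0: "{e'\<in>E. src e' = w} = {}" using st eE w_def by fastforce
            have fA: "finite {e'\<in>E. tgt e' = w}" using fin by simp
            have eA: "e \<in> {e'\<in>E. tgt e' = w}" using eE w_def by simp
            have "(\<Sum>e\<in>{e\<in>E. tgt e = w}. z e) = z e + (\<Sum>e\<in>{e\<in>E. tgt e = w} - {e}. z e)"
              using sum.remove[OF fA eA] by simp
            moreover have "(\<Sum>e\<in>{e\<in>E. tgt e = w} - {e}. z e) = 0"
            proof (rule sum.neutral, rule ballI)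
              fix e' assume "e' \<in> {e\<in>E. tgt e = w} - {e}"
              then have e': "e' \<in> E" "tgt e' = w" "e' \<noteq> e" by auto
              have "h \<in> {src e', tgt e'} \<Longrightarrow> src e' = src e \<and> tgt e' = tgt e"
                using True e' st[OF eE eE] st[OF e'(1) eE] st[OF eE e'(1)] w_def by auto
              then show "z e' = 0" using others e' by blast
            qed
            ultimately show ?thesis using bd s0 by simp
          next
            case False
            then have ht: "h = tgt e" using hh by auto
            define w where "w = src e"
            have wV: "w \<in> V" using VE eE w_def by blast
            have bd: "(\<Sum>e\<in>{e\<in>E. tgt e = w}. z e) - (\<Sum>e\<in>{e\<in>E. src e = w}. z e) = 0"
              using z wV unfolding graph_Z1_def by blast
            have s0: "{e'\<in>E. tgt e' = w} = {}" using st eE w_def by fastforce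
            have fA: "finite {e'\<in>E. src e' = w}" using fin by simp
            have eA: "e \<in> {e'\<in>E. src e' = w}" using eE w_def by simp
            have "(\<Sum>e\<in>{e\<in>E. src e = w}. z e) = z e + (\<Sum>e\<in>{e\<in>E. src e = w} - {e}. z e)"
              using sum.remove[OF fA eA] by simp
            moreover have "(\<Sum>e\<in>{e\<in>E. src e = w} - {e}. z e) = 0"
            proof (rule sum.neutral, rule ballI)
              fix e' assume "e' \<in> {e\<in>E. src e = w} - {e}"
              then have e': "e' \<in> E" "src e' = w" "e' \<noteq> e" by auto
              have "h \<in> {src e', tgt e'} \<Longrightarrow> src e' = src e \<and> tgt e' = tgt e"
                using ht e' st[OF eE eE] st[OF e'(1) eE] st[OF eE e'(1)] w_def by auto
              then show "z e' = 0" using others e' by blast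
            qed
            ultimately show ?thesis using bd s0 by simp
          qed
        qed
      qed
      then show "z \<in> {\<lambda>e. 0}" by auto
    qed
  qed
qed




lemma rep_id:
  assumes "(P,\<psi>) \<in> H" "fusion_system G T H"
  shows "rep_rel H P (restrict (\<lambda>x. x) P) \<psi>"
  unfolding rep_rel_def
proof (intro exI conjI)
  have "restrict (\<lambda>x. x) P ` P = P" by auto
  then show "(restrict (\<lambda>x. x) P ` P, \<psi>) \<in> H" "\<psi> ` restrict (\<lambda>x. x) P ` P = \<psi> ` P"
    using assms by auto
  show "compose P \<psi> (restrict (\<lambda>x. x) P) = \<psi>"
    using fsD(6)[OF assms(2,1)] by (auto simp: fun_eq_iff compose_def extensional_def)
qed

locale L =
  fixes G :: "('a, 'b) monoid_scheme" and S S' P :: "'a set"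
    and F1 F2 Fe :: "('a set \<times> ('a \<Rightarrow> 'a)) set"
  assumes grp: "group G" and S_sub: "subgroup S G" and S_fin: "finite S"
    and S'_sub: "subgroup S' G" and S'_le: "S' \<subseteq> S"
    and F1_fs: "fusion_system G S F1" and F2_fs: "fusion_system G S' F2"
    and Fe_fs: "fusion_system G S' Fe" and Fe_le: "Fe \<subseteq> F1 \<inter> F2"
    and P_sub: "subgroup P G" and P_S: "P \<subseteq> S"
    and hyp_e: "\<forall>Q. fs_conj (fusion_gen G S F1 F2) P Q \<longrightarrow>
                   Hom_fs Fe Q S' = Hom_fs F1 Q S' \<inter> Hom_fs F2 Q S'"
begin

abbreviation "F \<equiv> fusion_gen G S F1 F2"
abbreviation "V \<equiv> RepLam_V F F1 F2 S S' P"
abbreviation "E \<equiv> RepLam_E F Fe S' P"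
abbreviation "src \<equiv> RepLam_src F F2 S' P"
abbreviation "tgt \<equiv> RepLam_tgt F F1 S P"
abbreviation "Rel \<equiv> {(src e, tgt e) | e. e \<in> E} \<union> {(tgt e, src e) | e. e \<in> E}"
abbreviation "idP \<equiv> restrict (\<lambda>x. x) P"

lemma F_fs: "fusion_system G S F" and F1F: "F1 \<subseteq> F" and F2F: "F2 \<subseteq> F"
  using fusion_gen_props[OF grp S_sub F1_fs F2_fs S'_le] by auto

lemma FeF1: "Fe \<subseteq> F1" and FeF2: "Fe \<subseteq> F2" and FeF: "Fe \<subseteq> F"
  using Fe_le F1F by auto

lemma Fmap:
  assumes "(P,\<phi>) \<in> F"
  shows "\<phi> \<in> extensional P" "subgroup (\<phi> ` P) G" "\<phi> ` P \<subseteq> S"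
  using fsD[OF F_fs assms] fs_img_sub[OF F_fs assms] by auto

lemma idP_F: "(P, idP) \<in> F"
  using fs_id[OF F_fs grp S_sub P_sub P_S] .

lemma refl1: "(P,\<phi>) \<in> F \<Longrightarrow> rep_rel F1 P \<phi> \<phi>"
  using rep_refl[OF F1_fs grp S_sub Fmap(2) Fmap(3) Fmap(1)] by simp

lemma refl2: "(P,\<phi>) \<in> F \<Longrightarrow> \<phi> ` P \<subseteq> S' \<Longrightarrow> rep_rel F2 P \<phi> \<phi>"
  using rep_refl[OF F2_fs grp S'_sub Fmap(2)] Fmap(1) by simp

lemma refle: "(P,\<phi>) \<in> F \<Longrightarrow> \<phi> ` P \<subseteq> S' \<Longrightarrow> rep_rel Fe P \<phi> \<phi>"
  using rep_refl[OF Fe_fs grp S'_sub Fmap(2)] Fmap(1) by simp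

definition pick :: "('a \<Rightarrow> 'a) set \<Rightarrow> ('a \<Rightarrow> 'a)" where "pick c = (SOME \<phi>. \<phi> \<in> c)"

lemma src_def': "src c = Inr (rep_class F F2 S' P (pick c))"
  unfolding RepLam_src_def pick_def ..
lemma tgt_def': "tgt c = Inl (rep_class F F1 S P (pick c))"
  unfolding RepLam_tgt_def pick_def ..

lemma edge:
  assumes "c \<in> E"
  shows "pick c \<in> c" "pick c \<in> Hom_fs F P S'" "c = rep_class F Fe S' P (pick c)"
proof -
  obtain \<phi> where \<phi>: "\<phi> \<in> Hom_fs F P S'" "c = rep_class F Fe S' P \<phi>"
    using assms unfolding RepLam_E_def Rep_fs_def by blast
  have \<phi>F: "(P,\<phi>) \<in> F" "\<phi> ` P \<subseteq> S'" using \<phi>(1) unfolding Hom_fs_def by simp_all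
  have "\<phi> \<in> rep_class F Fe S' P \<phi>" unfolding rep_class_def using \<phi>(1) refle[OF \<phi>F] by simp
  then have "\<phi> \<in> c" unfolding \<phi>(2)[symmetric] .
  then show pc: "pick c \<in> c" unfolding pick_def by (rule someI[where P = "\<lambda>x. x \<in> c"])
  then have m: "pick c \<in> rep_class F Fe S' P \<phi>" unfolding \<phi>(2)[symmetric] .
  then show "pick c \<in> Hom_fs F P S'" unfolding rep_class_def by simp
  have r: "rep_rel Fe P \<phi> (pick c)" using m unfolding rep_class_def by simp
  have "rep_class F Fe S' P \<phi> = rep_class F Fe S' P (pick c)"
    using rep_class_eq[OF Fe_fs r Fmap(1)[OF \<phi>F(1)]] .
  then show "c = rep_class F Fe S' P (pick c)" using \<phi>(2) by simp
qed

lemma src_tgt_of: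
  assumes "\<phi> \<in> Hom_fs F P S'"
  shows "src (rep_class F Fe S' P \<phi>) = Inr (rep_class F F2 S' P \<phi>)"
        "tgt (rep_class F Fe S' P \<phi>) = Inl (rep_class F F1 S P \<phi>)"
        "rep_class F Fe S' P \<phi> \<in> E"
proof -
  let ?c = "rep_class F Fe S' P \<phi>"
  show cE: "?c \<in> E" using assms unfolding RepLam_E_def Rep_fs_def by (rule imageI)
  have "pick ?c \<in> ?c" using edge(1)[OF cE] .
  then have r: "rep_rel Fe P \<phi> (pick ?c)" unfolding rep_class_def by simp
  have \<phi>F: "(P,\<phi>) \<in> F" using assms unfolding Hom_fs_def by simp
  have ext: "\<phi> \<in> extensional P" using Fmap(1)[OF \<phi>F] .
  show "src ?c = Inr (rep_class F F2 S' P \<phi>)" unfolding src_def'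
    using rep_class_eq[OF F2_fs rep_mono[OF FeF2 r] ext] by simp
  show "tgt ?c = Inl (rep_class F F1 S P \<phi>)" unfolding tgt_def'
    using rep_class_eq[OF F1_fs rep_mono[OF FeF1 r] ext] by simp
qed

lemma Rel_fw: "e \<in> E \<Longrightarrow> (src e, tgt e) \<in> Rel"
  by (intro UnI1 CollectI exI[of _ e] conjI refl)
lemma Rel_bw: "e \<in> E \<Longrightarrow> (tgt e, src e) \<in> Rel"
  by (intro UnI2 CollectI exI[of _ e] conjI refl)

abbreviation "reach \<phi> \<psi> \<equiv> (Inl (rep_class F F1 S P \<phi>), Inl (rep_class F F1 S P \<psi>)) \<in> Rel\<^sup>*"

lemma Rel_sym: "sym (Rel\<^sup>*)"
  by (rule sym_rtrancl) (auto simp: sym_def)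

lemma reach_sym: "reach \<phi> \<psi> \<Longrightarrow> reach \<psi> \<phi>"
  using Rel_sym unfolding sym_def by blast

definition F' where
  "F' = {(Q,\<chi>). (Q,\<chi>) \<in> F \<and> (\<forall>\<phi>. (P,\<phi>) \<in> F \<and> \<phi> ` P \<subseteq> Q \<longrightarrow> reach \<phi> (compose P \<chi> \<phi>))}"

lemma F1_F': "F1 \<subseteq> F'"
proof
  fix x assume "x \<in> F1"
  then obtain Q \<chi> where x: "x = (Q,\<chi>)" "(Q,\<chi>) \<in> F1" by (cases x) auto
  have "reach \<phi> (compose P \<chi> \<phi>)" if "(P,\<phi>) \<in> F" "\<phi> ` P \<subseteq> Q" for \<phi>
  proof -
    have "rep_rel F1 P \<phi> (compose P \<chi> \<phi>)"
      using rep_restr[OF F1_fs grp S_sub x(2) that(2) Fmap(2)[OF that(1)]] .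
    then have "rep_class F F1 S P \<phi> = rep_class F F1 S P (compose P \<chi> \<phi>)"
      using rep_class_eq[OF F1_fs _ Fmap(1)[OF that(1)]] by simp
    then show ?thesis by simp
  qed
  then show "x \<in> F'" unfolding F'_def using x F1F by auto
qed

lemma F2_F': "F2 \<subseteq> F'"
proof
  fix x assume "x \<in> F2"
  then obtain Q \<chi> where x: "x = (Q,\<chi>)" "(Q,\<chi>) \<in> F2" by (cases x) auto
  have "reach \<phi> (compose P \<chi> \<phi>)" if \<phi>: "(P,\<phi>) \<in> F" "\<phi> ` P \<subseteq> Q" for \<phi>
  proof -
    let ?\<psi> = "compose P \<chi> \<phi>"
    have QS': "Q \<subseteq> S'" using fsD(2)[OF F2_fs x(2)] .
    have \<psi>F: "(P, ?\<psi>) \<in> F" using fs_comp[OF F_fs \<phi>(1) _ \<phi>(2)] x(2) F2F by blast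
    have "\<chi> ` Q \<subseteq> S'" using fsD(4)[OF F2_fs x(2)] .
    then have \<psi>S': "?\<psi> ` P \<subseteq> S'" using \<phi>(2) by (auto simp: compose_eq)
    have r: "rep_rel F2 P \<phi> ?\<psi>"
      using rep_restr[OF F2_fs grp S'_sub x(2) \<phi>(2) Fmap(2)[OF \<phi>(1)]] .
    have eq2: "rep_class F F2 S' P \<phi> = rep_class F F2 S' P ?\<psi>"
      using rep_class_eq[OF F2_fs r Fmap(1)[OF \<phi>(1)]] .
    have h1: "\<phi> \<in> Hom_fs F P S'" using \<phi> QS' unfolding Hom_fs_def by auto
    have h2: "?\<psi> \<in> Hom_fs F P S'" using \<psi>F \<psi>S' unfolding Hom_fs_def by auto
    note a = src_tgt_of[OF h1] and b = src_tgt_of[OF h2]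
    have s1: "(Inl (rep_class F F1 S P \<phi>), Inr (rep_class F F2 S' P \<phi>)) \<in> Rel"
      using Rel_bw[OF a(3)] unfolding a(1) a(2) .
    have s2: "(Inr (rep_class F F2 S' P ?\<psi>), Inl (rep_class F F1 S P ?\<psi>)) \<in> Rel"
      using Rel_fw[OF b(3)] unfolding b(1) b(2) .
    then have s2': "(Inr (rep_class F F2 S' P \<phi>), Inl (rep_class F F1 S P ?\<psi>)) \<in> Rel"
      unfolding eq2 .
    show ?thesis using r_into_rtrancl[OF s1] r_into_rtrancl[OF s2'] by (rule rtrancl_trans)
  qed
  then show "x \<in> F'" unfolding F'_def using x F2F by auto
qed

lemma F'_fs: "fusion_system G S F'"
  unfolding fusion_system_def
proof (intro conjI allI impI)
  show "\<forall>(Q, \<phi>)\<in>F'. subgroup Q G \<and> Q \<subseteq> S \<and> \<phi> \<in> hom (G\<lparr>carrier := Q\<rparr>) G \<and>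
        \<phi> ` Q \<subseteq> S \<and> inj_on \<phi> Q \<and> \<phi> \<in> extensional Q"
  proof clarify
    fix Q \<phi> assume "(Q, \<phi>) \<in> F'"
    then have "(Q, \<phi>) \<in> F" unfolding F'_def by auto
    note d = fsD[OF F_fs this]
    show "subgroup Q G \<and> Q \<subseteq> S \<and> \<phi> \<in> hom (G\<lparr>carrier := Q\<rparr>) G \<and>
        \<phi> ` Q \<subseteq> S \<and> inj_on \<phi> Q \<and> \<phi> \<in> extensional Q" using d by blast
  qed
next
  fix Q s assume "subgroup Q G \<and> Q \<subseteq> S \<and> s \<in> S"
  then show "(Q, conjmap G s Q) \<in> F'" using fs_conjmap[OF F1_fs] F1_F' by blast
next
  fix Q \<chi> R \<omega> assume a: "(Q, \<chi>) \<in> F' \<and> (R, \<omega>) \<in> F' \<and> \<chi> ` Q \<subseteq> R"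
  then have QF: "(Q,\<chi>) \<in> F" and RF: "(R,\<omega>) \<in> F" unfolding F'_def by auto
  have cF: "(Q, compose Q \<omega> \<chi>) \<in> F" using fs_comp[OF F_fs QF RF] a by blast
  have "reach \<phi> (compose P (compose Q \<omega> \<chi>) \<phi>)" if \<phi>: "(P,\<phi>) \<in> F" "\<phi> ` P \<subseteq> Q" for \<phi>
  proof -
    let ?\<alpha> = "compose P \<chi> \<phi>"
    have \<alpha>F: "(P, ?\<alpha>) \<in> F" using fs_comp[OF F_fs \<phi>(1) QF \<phi>(2)] .
    have \<alpha>R: "?\<alpha> ` P \<subseteq> R" using a \<phi>(2) by (auto simp: compose_eq)
    have r1: "reach \<phi> ?\<alpha>" using a \<phi> unfolding F'_def by auto
    have r2: "reach ?\<alpha> (compose P \<omega> ?\<alpha>)" using a \<alpha>F \<alpha>R unfolding F'_def by auto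
    have "compose P \<omega> ?\<alpha> = compose P (compose Q \<omega> \<chi>) \<phi>"
      using \<phi>(2) by (auto simp: fun_eq_iff compose_def)
    then show ?thesis using rtrancl_trans[OF r1 r2] by simp
  qed
  then show "(Q, compose Q \<omega> \<chi>) \<in> F'" unfolding F'_def using cF by auto
next
  fix Q \<chi> assume a: "(Q, \<chi>) \<in> F'"
  then have QF: "(Q,\<chi>) \<in> F" unfolding F'_def by auto
  let ?\<chi>' = "restrict (inv_into Q \<chi>) (\<chi> ` Q)"
  have iF: "(\<chi> ` Q, ?\<chi>') \<in> F" using fs_inv[OF F_fs QF] .
  have "reach \<phi> (compose P ?\<chi>' \<phi>)" if \<phi>: "(P,\<phi>) \<in> F" "\<phi> ` P \<subseteq> \<chi> ` Q" for \<phi>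
  proof -
    let ?\<alpha> = "compose P ?\<chi>' \<phi>"
    have \<alpha>F: "(P, ?\<alpha>) \<in> F" using fs_comp[OF F_fs \<phi>(1) iF \<phi>(2)] .
    have \<alpha>Q: "?\<alpha> ` P \<subseteq> Q" using \<phi>(2) by (auto simp: compose_eq inv_into_into)
    have r: "reach ?\<alpha> (compose P \<chi> ?\<alpha>)" using a \<alpha>F \<alpha>Q unfolding F'_def by auto
    have ext: "\<phi> \<in> extensional P" using Fmap[OF \<phi>(1)] by blast
    have "compose P \<chi> ?\<alpha> = \<phi>"
    proof
      fix x show "compose P \<chi> ?\<alpha> x = \<phi> x"
      proof (cases "x \<in> P")
        case True
        then have "\<phi> x \<in> \<chi> ` Q" using \<phi>(2) by auto
        then show ?thesis using True by (simp add: compose_eq f_inv_into_f)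
      next
        case False then show ?thesis using ext by (simp add: compose_def extensional_def)
      qed
    qed
    then show ?thesis using reach_sym r by simp
  qed
  then show "(\<chi> ` Q, ?\<chi>') \<in> F'" unfolding F'_def using iF by auto
qed

lemma F_F': "F \<subseteq> F'"
  using fusion_gen_props(4)[OF grp S_sub F1_fs F2_fs S'_le F'_fs F1_F' F2_F'] .

lemma reach_all: "(P,\<phi>) \<in> F \<Longrightarrow> reach idP \<phi>"
proof -
  assume \<phi>: "(P,\<phi>) \<in> F"
  then have "(P,\<phi>) \<in> F'" using F_F' by blast
  then have "reach idP (compose P \<phi> idP)" using idP_F unfolding F'_def by auto
  moreover have "compose P \<phi> idP = \<phi>" using Fmap(1)[OF \<phi>]
    by (auto simp: fun_eq_iff compose_def extensional_def)
  ultimately show ?thesis by simp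
qed

lemma connected: "graph_connected V E src tgt"
proof -
  let ?r = "Inl (rep_class F F1 S P idP) :: ('a \<Rightarrow> 'a) set + ('a \<Rightarrow> 'a) set"
  have idH: "idP \<in> Hom_fs F P S" using idP_F P_S unfolding Hom_fs_def by auto
  have rV: "?r \<in> V" using idH unfolding RepLam_V_def Rep_fs_def by blast
  have all: "(?r, u) \<in> Rel\<^sup>*" if u: "u \<in> V" for u
  proof -
    consider (l) \<phi> where "\<phi> \<in> Hom_fs F P S" "u = Inl (rep_class F F1 S P \<phi>)"
      | (r) \<phi> where "\<phi> \<in> Hom_fs F P S'" "u = Inr (rep_class F F2 S' P \<phi>)"
      using u unfolding RepLam_V_def Rep_fs_def by blast
    then show ?thesis
    proof cases
      case l then show ?thesis using reach_all unfolding Hom_fs_def by auto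
    next
      case r
      have "reach idP \<phi>" using reach_all r(1) unfolding Hom_fs_def by auto
      moreover note a = src_tgt_of[OF r(1)]
      have "(Inl (rep_class F F1 S P \<phi>), u) \<in> Rel" using Rel_bw[OF a(3)] unfolding a(1) a(2) r(2) .
      ultimately show ?thesis by (rule rtrancl_into_rtrancl)
    qed
  qed
  have "(u, w) \<in> Rel\<^sup>*" if "u \<in> V" "w \<in> V" for u w
  proof -
    have "(u, ?r) \<in> Rel\<^sup>*" using all[OF that(1)] Rel_sym unfolding sym_def by blast
    then show ?thesis using all[OF that(2)] by (rule rtrancl_trans)
  qed
  then show ?thesis unfolding graph_connected_def using rV by blast
qed

lemma finE: "finite E"
proof -
  have "Hom_fs F P S' \<subseteq> PiE P (\<lambda>_. S)"
  proof
    fix \<phi> assume "\<phi> \<in> Hom_fs F P S'"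
    then have \<phi>F: "(P,\<phi>) \<in> F" and im: "\<phi> ` P \<subseteq> S'" unfolding Hom_fs_def by simp_all
    have "\<phi> ` P \<subseteq> S" using im S'_le by (rule subset_trans)
    then show "\<phi> \<in> PiE P (\<lambda>_. S)" using Fmap(1)[OF \<phi>F] by (simp add: PiE_iff image_subset_iff)
  qed
  moreover have "finite P" using S_fin P_S by (rule rev_finite_subset)
  then have "finite (PiE P (\<lambda>_. S))" using S_fin by (intro finite_PiE) simp_all
  ultimately have "finite (Hom_fs F P S')" by (rule finite_subset)
  then show ?thesis unfolding RepLam_E_def Rep_fs_def by simp
qed

lemma VE: "c \<in> E \<Longrightarrow> src c \<in> V \<and> tgt c \<in> V"
proof -
  assume c: "c \<in> E"
  have h: "pick c \<in> Hom_fs F P S'" using edge[OF c] by blast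
  then have h': "pick c \<in> Hom_fs F P S" using S'_le unfolding Hom_fs_def by auto
  show ?thesis unfolding src_def' tgt_def' RepLam_V_def Rep_fs_def using h h' by blast
qed

lemma st: "src c \<noteq> tgt c'"
  unfolding src_def' tgt_def' by simp

lemma class_rel:
  assumes "(P,\<psi>') \<in> F" "\<psi>' ` P \<subseteq> T" "rep_rel H P \<psi>' \<psi>'"
    "rep_class F H T P \<psi> = rep_class F H T P \<psi>'"
  shows "rep_rel H P \<psi> \<psi>'"
proof -
  have "\<psi>' \<in> rep_class F H T P \<psi>'" using assms unfolding rep_class_def Hom_fs_def by auto
  then show ?thesis using assms(4) unfolding rep_class_def by auto
qed

lemma inj_edges:
  assumes c: "c \<in> E" and c': "c' \<in> E" and s: "src c = src c'" and t: "tgt c = tgt c'"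
  shows "c = c'"
proof -
  let ?\<psi> = "pick c" and ?\<psi>' = "pick c'"
  have h: "?\<psi> \<in> Hom_fs F P S'" and h': "?\<psi>' \<in> Hom_fs F P S'" using edge c c' by auto
  have \<psi>F: "(P,?\<psi>) \<in> F" "?\<psi> ` P \<subseteq> S'" and \<psi>'F: "(P,?\<psi>') \<in> F" "?\<psi>' ` P \<subseteq> S'"
    using h h' unfolding Hom_fs_def by auto
  have r2: "rep_rel F2 P ?\<psi> ?\<psi>'"
    using class_rel[OF \<psi>'F refl2[OF \<psi>'F]] s unfolding src_def' by simp
  have r1: "rep_rel F1 P ?\<psi> ?\<psi>'"
  proof -
    have "?\<psi>' ` P \<subseteq> S" using \<psi>'F(2) S'_le by (rule subset_trans)
    moreover have "rep_class F F1 S P ?\<psi> = rep_class F F1 S P ?\<psi>'" using t unfolding tgt_def' by simp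
    ultimately show ?thesis using class_rel[OF \<psi>'F(1) _ refl1[OF \<psi>'F(1)]] by blast
  qed
  obtain \<theta>1 where t1: "(?\<psi> ` P, \<theta>1) \<in> F1" "\<theta>1 ` ?\<psi> ` P = ?\<psi>' ` P" "compose P \<theta>1 ?\<psi> = ?\<psi>'"
    using r1 unfolding rep_rel_def by blast
  obtain \<theta>2 where t2: "(?\<psi> ` P, \<theta>2) \<in> F2" "\<theta>2 ` ?\<psi> ` P = ?\<psi>' ` P" "compose P \<theta>2 ?\<psi> = ?\<psi>'"
    using r2 unfolding rep_rel_def by blast
  have "\<theta>1 = \<theta>2"
  proof (rule extensionalityI)
    show "\<theta>1 \<in> extensional (?\<psi> ` P)" using fsD(6)[OF F1_fs t1(1)] .
    show "\<theta>2 \<in> extensional (?\<psi> ` P)" using fsD(6)[OF F2_fs t2(1)] .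
    fix y assume "y \<in> ?\<psi> ` P"
    then obtain x where x: "x \<in> P" "y = ?\<psi> x" by auto
    have "\<theta>1 y = compose P \<theta>1 ?\<psi> x" using x by (simp add: compose_eq)
    also have "\<dots> = compose P \<theta>2 ?\<psi> x" using t1(3) t2(3) by simp
    also have "\<dots> = \<theta>2 y" using x by (simp add: compose_eq)
    finally show "\<theta>1 y = \<theta>2 y" .
  qed
  have "fs_conj F P (?\<psi> ` P)" unfolding fs_conj_def using \<psi>F by blast
  then have "Hom_fs Fe (?\<psi> ` P) S' = Hom_fs F1 (?\<psi> ` P) S' \<inter> Hom_fs F2 (?\<psi> ` P) S'"
    using hyp_e by blast
  moreover have "\<theta>1 \<in> Hom_fs F1 (?\<psi> ` P) S' \<inter> Hom_fs F2 (?\<psi> ` P) S'"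
    using t1 t2 \<open>\<theta>1 = \<theta>2\<close> \<psi>'F(2) unfolding Hom_fs_def by auto
  ultimately have "(?\<psi> ` P, \<theta>1) \<in> Fe" unfolding Hom_fs_def by auto
  then have "rep_rel Fe P ?\<psi> ?\<psi>'" unfolding rep_rel_def using t1 by blast
  then have "rep_class F Fe S' P ?\<psi> = rep_class F Fe S' P ?\<psi>'"
    using rep_class_eq[OF Fe_fs] Fmap \<psi>F by blast
  then show ?thesis using edge(3)[OF c] edge(3)[OF c'] by simp
qed

lemma idP_ext: "idP \<in> extensional P" by simp

lemma hub_F1:
  assumes H: "Hom_fs F P S' = Hom_fs F1 P S'" and c: "c \<in> E"
  shows "tgt c = Inl (rep_class F F1 S P idP)"
proof -
  have "pick c \<in> Hom_fs F1 P S'" using edge(2)[OF c] H by simp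
  then have "(P, pick c) \<in> F1" unfolding Hom_fs_def by auto
  then have "rep_rel F1 P idP (pick c)" using rep_id F1_fs by blast
  then show ?thesis unfolding tgt_def' using rep_class_eq[OF F1_fs _ idP_ext] by simp
qed

lemma hub_F2:
  assumes "(P, pick c) \<in> F2"
  shows "src c = Inr (rep_class F F2 S' P idP)"
proof -
  have "rep_rel F2 P idP (pick c)" using rep_id F2_fs assms by blast
  then show ?thesis unfolding src_def' using rep_class_eq[OF F2_fs _ idP_ext] by simp
qed

lemma leaf2:
  assumes c: "c \<in> E" and H: "Hom_fs Fe (pick c ` P) S' = Hom_fs F2 (pick c ` P) S'"
  shows "\<forall>c'\<in>E. src c \<in> {src c', tgt c'} \<longrightarrow> c' = c"
proof (intro ballI impI)
  fix c' assume c': "c' \<in> E" and "src c \<in> {src c', tgt c'}"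
  then have s: "src c' = src c" using st by auto
  let ?\<psi> = "pick c" and ?\<psi>' = "pick c'"
  have h: "?\<psi> \<in> Hom_fs F P S'" and h': "?\<psi>' \<in> Hom_fs F P S'" using edge c c' by auto
  have \<psi>F: "(P,?\<psi>) \<in> F" "?\<psi> ` P \<subseteq> S'" and \<psi>'F: "(P,?\<psi>') \<in> F" "?\<psi>' ` P \<subseteq> S'"
    using h h' unfolding Hom_fs_def by auto
  have r2: "rep_rel F2 P ?\<psi> ?\<psi>'"
    using class_rel[OF \<psi>'F refl2[OF \<psi>'F]] s unfolding src_def' by simp
  obtain \<theta> where t: "(?\<psi> ` P, \<theta>) \<in> F2" "\<theta> ` ?\<psi> ` P = ?\<psi>' ` P" "compose P \<theta> ?\<psi> = ?\<psi>'"
    using r2 unfolding rep_rel_def by blast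
  have "\<theta> \<in> Hom_fs F2 (?\<psi> ` P) S'" using t \<psi>'F unfolding Hom_fs_def by auto
  then have "(?\<psi> ` P, \<theta>) \<in> Fe" using H unfolding Hom_fs_def by auto
  then have "rep_rel Fe P ?\<psi> ?\<psi>'" unfolding rep_rel_def using t by blast
  then have "rep_class F Fe S' P ?\<psi> = rep_class F Fe S' P ?\<psi>'"
    using rep_class_eq[OF Fe_fs] Fmap \<psi>F by blast
  then show "c' = c" using edge(3)[OF c] edge(3)[OF c'] by simp
qed

lemma conj_case:
  assumes c: "c \<in> E" and A: "Aut_fs F P = Aut_fs F2 P" and cj: "fs_conj Fe P (pick c ` P)"
  shows "(P, pick c) \<in> F2"
proof -
  let ?\<psi> = "pick c" let ?Q = "pick c ` P"
  have \<psi>F: "(P,?\<psi>) \<in> F" using edge(2)[OF c] unfolding Hom_fs_def by auto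
  obtain \<beta> where \<beta>: "(P,\<beta>) \<in> Fe" "\<beta> ` P = ?Q" using cj unfolding fs_conj_def by blast
  let ?\<beta>' = "restrict (inv_into P \<beta>) ?Q"
  have b'F: "(?Q, ?\<beta>') \<in> F" using fs_inv[OF Fe_fs \<beta>(1)] \<beta>(2) FeF by auto
  have injb: "inj_on \<beta> P" using fsD(5)[OF Fe_fs \<beta>(1)] .
  let ?\<alpha> = "compose P ?\<beta>' ?\<psi>"
  have \<alpha>F: "(P, ?\<alpha>) \<in> F" using fs_comp[OF F_fs \<psi>F b'F] by simp
  have "?\<alpha> ` P = P"
  proof
    show "?\<alpha> ` P \<subseteq> P"
    proof
      fix z assume "z \<in> ?\<alpha> ` P"
      then obtain x where x: "x \<in> P" "z = ?\<alpha> x" by blast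
      have "?\<psi> x \<in> \<beta> ` P" using x(1) \<beta>(2) by simp
      then have "inv_into P \<beta> (?\<psi> x) \<in> P" by (rule inv_into_into)
      then show "z \<in> P" using x by (simp add: compose_eq)
    qed
    show "P \<subseteq> ?\<alpha> ` P"
    proof
      fix x assume x: "x \<in> P"
      then have "\<beta> x \<in> ?Q" using \<beta>(2) by blast
      then obtain y where y: "y \<in> P" "?\<psi> y = \<beta> x" by auto
      have "?\<psi> y \<in> ?Q" using y(1) by simp
      then have "?\<alpha> y = inv_into P \<beta> (\<beta> x)" using y by (simp add: compose_eq)
      also have "\<dots> = x" using injb x by (rule inv_into_f_f)
      finally have "?\<alpha> y = x" .
      then show "x \<in> ?\<alpha> ` P" using y by force
    qed
  qed
  then have "?\<alpha> \<in> Aut_fs F P" using \<alpha>F unfolding Aut_fs_def by auto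
  then have aF2: "(P, ?\<alpha>) \<in> F2" using A unfolding Aut_fs_def by auto
  have bF2: "(P,\<beta>) \<in> F2" using \<beta>(1) FeF2 by blast
  have "(P, compose P \<beta> ?\<alpha>) \<in> F2" using fs_comp[OF F2_fs aF2 bF2] \<open>?\<alpha> ` P = P\<close> by simp
  moreover have "compose P \<beta> ?\<alpha> = ?\<psi>"
  proof
    fix x show "compose P \<beta> ?\<alpha> x = ?\<psi> x"
    proof (cases "x \<in> P")
      case True
      then have "?\<psi> x \<in> \<beta> ` P" using \<beta>(2) by auto
      then show ?thesis using True by (simp add: compose_eq f_inv_into_f)
    next
      case False then show ?thesis using Fmap(1)[OF \<psi>F] by (simp add: compose_def extensional_def)
    qed
  qed
  ultimately show ?thesis by simp
qed

end




theorem lemma4p1: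
  fixes G :: "('a, 'b) monoid_scheme"
    and p :: nat
    and S S' P :: "'a set"
    and F1 F2 Fe :: "('a set \<times> ('a \<Rightarrow> 'a)) set"
    and C :: "'a set set"
  assumes grp: "group G"
    and p_prime: "prime p"
    and S_sub: "subgroup S G" and S_fin: "finite S" and S_pgrp: "\<exists>n. card S = p ^ n"
    and S'_sub: "subgroup S' G" and S'_le: "S' \<subseteq> S"
    and F1_fs: "fusion_system G S F1"
    and F2_fs: "fusion_system G S' F2"
    and Fe_fs: "fusion_system G S' Fe"
    and Fe_le: "Fe \<subseteq> F1 \<inter> F2"
    and C_sub: "\<forall>Q\<in>C. subgroup Q G \<and> Q \<subseteq> S"
    and S'_C: "S' \<in> C"
    and C_conj: "\<forall>Q\<in>C. \<forall>R. fs_conj (fusion_gen G S F1 F2) Q R \<longrightarrow> R \<in> C"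
    and C_over: "\<forall>Q\<in>C. \<forall>R. subgroup R G \<and> Q \<subseteq> R \<and> R \<subseteq> S \<longrightarrow> R \<in> C"
    and P_C: "P \<in> C"
    and hyp_e: "\<forall>Q. fs_conj (fusion_gen G S F1 F2) P Q \<longrightarrow>
                   Hom_fs Fe Q S' = Hom_fs F1 Q S' \<inter> Hom_fs F2 Q S'"
    and hyp_12: "(\<exists>H \<in> {F1, F2}. Hom_fs (fusion_gen G S F1 F2) P S' = Hom_fs H P S')
               \<or> (Aut_fs (fusion_gen G S F1 F2) P = Aut_fs F2 P \<and>
                  (\<forall>Q. fs_conj (fusion_gen G S F1 F2) P Q \<and> \<not> fs_conj Fe P Q \<longrightarrow>
                       Hom_fs Fe Q S' = Hom_fs F2 Q S'))"
  shows "graph_is_tree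
           (RepLam_V (fusion_gen G S F1 F2) F1 F2 S S' P)
           (RepLam_E (fusion_gen G S F1 F2) Fe S' P)
           (RepLam_src (fusion_gen G S F1 F2) F2 S' P)
           (RepLam_tgt (fusion_gen G S F1 F2) F1 S P)
       \<and> graph_H1_zero
           (RepLam_V (fusion_gen G S F1 F2) F1 F2 S S' P)
           (RepLam_E (fusion_gen G S F1 F2) Fe S' P)
           (RepLam_src (fusion_gen G S F1 F2) F2 S' P)
           (RepLam_tgt (fusion_gen G S F1 F2) F1 S P)
           TYPE('r::comm_ring_1)"
proof -
  have PC: "subgroup P G \<and> P \<subseteq> S" using C_sub P_C by (rule bspec)
  then have P_sub: "subgroup P G" and P_S: "P \<subseteq> S" by simp_all
  interpret L G S S' P F1 F2 Fe
    by (rule L.intro) (fact grp S_sub S_fin S'_sub S'_le F1_fs F2_fs Fe_fs Fe_le P_sub P_S hyp_e)+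
  let ?F = "fusion_gen G S F1 F2"
  let ?V = "RepLam_V ?F F1 F2 S S' P"
  let ?E = "RepLam_E ?F Fe S' P"
  let ?src = "RepLam_src ?F F2 S' P"
  let ?tgt = "RepLam_tgt ?F F1 S P"
  have hub: "\<exists>h. \<forall>e\<in>?E. h \<in> {?src e, ?tgt e} \<or>
                 (\<exists>w\<in>{?src e, ?tgt e}. \<forall>e'\<in>?E. w \<in> {?src e', ?tgt e'} \<longrightarrow> e' = e)"
  proof (cases "\<exists>H \<in> {F1, F2}. Hom_fs ?F P S' = Hom_fs H P S'")
    case True
    then consider (a) "Hom_fs ?F P S' = Hom_fs F1 P S'" | (b) "Hom_fs ?F P S' = Hom_fs F2 P S'"
      by blast
    then show ?thesis
    proof cases
      case a
      have "\<forall>e\<in>?E. Inl (rep_class ?F F1 S P idP) \<in> {?src e, ?tgt e}"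
        using hub_F1[OF a] by simp
      then show ?thesis by blast
    next
      case b
      have "\<forall>e\<in>?E. Inr (rep_class ?F F2 S' P idP) \<in> {?src e, ?tgt e}"
      proof
        fix e assume e: "e \<in> ?E"
        have "pick e \<in> Hom_fs F2 P S'" using edge(2)[OF e] b by simp
        then have "(P, pick e) \<in> F2" unfolding Hom_fs_def by simp
        then show "Inr (rep_class ?F F2 S' P idP) \<in> {?src e, ?tgt e}" using hub_F2 by simp
      qed
      then show ?thesis by blast
    qed
  next
    case False
    then have A: "Aut_fs ?F P = Aut_fs F2 P" and
      H2: "\<forall>Q. fs_conj ?F P Q \<and> \<not> fs_conj Fe P Q \<longrightarrow> Hom_fs Fe Q S' = Hom_fs F2 Q S'"
      using hyp_12 by simp_all
    have "\<forall>e\<in>?E. Inr (rep_class ?F F2 S' P idP) \<in> {?src e, ?tgt e} \<or>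
                 (\<exists>w\<in>{?src e, ?tgt e}. \<forall>e'\<in>?E. w \<in> {?src e', ?tgt e'} \<longrightarrow> e' = e)"
    proof
      fix e assume e: "e \<in> ?E"
      show "Inr (rep_class ?F F2 S' P idP) \<in> {?src e, ?tgt e} \<or>
                 (\<exists>w\<in>{?src e, ?tgt e}. \<forall>e'\<in>?E. w \<in> {?src e', ?tgt e'} \<longrightarrow> e' = e)"
      proof (cases "fs_conj Fe P (pick e ` P)")
        case True
        have "?src e = Inr (rep_class ?F F2 S' P idP)" using hub_F2[OF conj_case[OF e A True]] .
        then show ?thesis by simp
      next
        case False
        have "(P, pick e) \<in> ?F" using edge(2)[OF e] unfolding Hom_fs_def by simp
        then have "fs_conj ?F P (pick e ` P)" unfolding fs_conj_def by blast
        then have "Hom_fs Fe (pick e ` P) S' = Hom_fs F2 (pick e ` P) S'" using H2 False by blast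
        from leaf2[OF e this] have "\<forall>e'\<in>?E. ?src e \<in> {?src e', ?tgt e'} \<longrightarrow> e' = e" .
        then show ?thesis by blast
      qed
    qed
    then show ?thesis by blast
  qed
  then obtain h where h: "\<forall>e\<in>?E. h \<in> {?src e, ?tgt e} \<or>
                 (\<exists>w\<in>{?src e, ?tgt e}. \<forall>e'\<in>?E. w \<in> {?src e', ?tgt e'} \<longrightarrow> e' = e)" by blast
  have gl: "\<not> graph_has_cycle ?V ?E ?src ?tgt \<and> graph_Z1 ?V ?E ?src ?tgt = {(\<lambda>e. 0 :: 'r)}"
  proof (rule conjI)
    show "\<not> graph_has_cycle ?V ?E ?src ?tgt"
    proof (rule graph_lemma(1)[where h = h])
      show "finite ?E" by (rule finE)
      show "\<And>e. e \<in> ?E \<Longrightarrow> ?src e \<in> ?V \<and> ?tgt e \<in> ?V" by (rule VE)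
      show "\<And>e e'. e \<in> ?E \<Longrightarrow> e' \<in> ?E \<Longrightarrow> ?src e \<noteq> ?tgt e'" by (rule st)
      show "\<And>e e'. e \<in> ?E \<Longrightarrow> e' \<in> ?E \<Longrightarrow> ?src e = ?src e' \<Longrightarrow> ?tgt e = ?tgt e' \<Longrightarrow> e = e'"
        by (rule inj_edges)
      show "\<And>e. e \<in> ?E \<Longrightarrow> h \<in> {?src e, ?tgt e} \<or>
                 (\<exists>w\<in>{?src e, ?tgt e}. \<forall>e'\<in>?E. w \<in> {?src e', ?tgt e'} \<longrightarrow> e' = e)"
        using h by (rule bspec)
    qed
    show "graph_Z1 ?V ?E ?src ?tgt = {(\<lambda>e. 0 :: 'r)}"
    proof (rule graph_lemma(2)[where h = h])
      show "finite ?E" by (rule finE)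
      show "\<And>e. e \<in> ?E \<Longrightarrow> ?src e \<in> ?V \<and> ?tgt e \<in> ?V" by (rule VE)
      show "\<And>e e'. e \<in> ?E \<Longrightarrow> e' \<in> ?E \<Longrightarrow> ?src e \<noteq> ?tgt e'" by (rule st)
      show "\<And>e e'. e \<in> ?E \<Longrightarrow> e' \<in> ?E \<Longrightarrow> ?src e = ?src e' \<Longrightarrow> ?tgt e = ?tgt e' \<Longrightarrow> e = e'"
        by (rule inj_edges)
      show "\<And>e. e \<in> ?E \<Longrightarrow> h \<in> {?src e, ?tgt e} \<or>
                 (\<exists>w\<in>{?src e, ?tgt e}. \<forall>e'\<in>?E. w \<in> {?src e', ?tgt e'} \<longrightarrow> e' = e)"
        using h by (rule bspec)
    qed
  qed
  show ?thesis
    unfolding graph_is_tree_def graph_H1_zero_def using connected gl by simp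
qed


end
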